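(* Let $m\geq 13$ and $k\geq 1$ be integers and let $c(x)=1+\sum_{j\in\{1,2,5,6\}}(x^j+x^{m-j})\in\mathbb{F}_2[x]$. Then $\gcd(c(x^k),x^m-1)=1$ if and only if $\gcd(m,3k)=\gcd(m,k)$.
   Context: All polynomials are over $\mathbb{F}_2$. *)

theory Defs
  imports "HOL-Computational_Algebra.Computational_Algebra" "HOL-Computational_Algebra.Field_as_Ring" "HOL-Library.Z2"
begin
instantiation bit :: "{unique_euclidean_ring, normalization_euclidean_semiring, normalization_semidom_multiplicative}"
begin
definition [simp]: "normalize_bit = (normalize_field :: bit \<Rightarrow> _)"
definition [simp]: "unit_factor_bit = (unit_factor_field :: bit \<Rightarrow> _)"
definition [simp]: "euclidean_size_bit = (euclidean_size_field :: bit \<Rightarrow> _)"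
definition [simp]: "division_segment (x :: bit) = 1"
instance
  by standard (simp_all add: dvd_field_iff field_split_simps split: if_splits)
end
instantiation bit :: euclidean_ring_gcd
begin
definition gcd_bit :: "bit \<Rightarrow> bit \<Rightarrow> bit" where "gcd_bit = Euclidean_Algorithm.gcd"
definition lcm_bit :: "bit \<Rightarrow> bit \<Rightarrow> bit" where "lcm_bit = Euclidean_Algorithm.lcm"
definition Gcd_bit :: "bit set \<Rightarrow> bit" where "Gcd_bit = Euclidean_Algorithm.Gcd"
definition Lcm_bit :: "bit set \<Rightarrow> bit" where "Lcm_bit = Euclidean_Algorithm.Lcm"
instance by standard (simp_all add: gcd_bit_def lcm_bit_def Gcd_bit_def Lcm_bit_def)
end
instance bit :: field_gcd ..

text \<open>F_2 is the type bit (HOL-Library.Z2); above it is given the standard field gcd structure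
  (as the library does for rat/real) so that gcd is available on bit poly.
  c(x) = 1 + sum over j in {1,2,5,6} of (x^j + x^(m-j)).\<close>

definition cpoly :: "nat \<Rightarrow> bit poly" where
  "cpoly m = 1 + (\<Sum>j\<in>{1,2,5,6::nat}. monom 1 j + monom 1 (m - j))"
end

theory Submission
  imports Defs
begin

lemma dvd_pow_sub1: fixes x :: "'a::comm_ring_1"
  shows "x - 1 dvd x ^ n - 1"
proof (induction n)
  case 0 then show ?case by simp
next
  case (Suc n)
  have "x ^ Suc n - 1 = x * (x ^ n - 1) + (x - 1)" by (simp add: algebra_simps)
  then show ?case using Suc by (metis dvd_add dvd_mult dvd_refl)
qed

lemma dvd_pow_mult_sub1: fixes x :: "'a::comm_ring_1"
  shows "x ^ a - 1 dvd x ^ (a * c) - 1"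
  using dvd_pow_sub1[of "x ^ a" c] by (simp add: power_mult)

lemma dvd_pow_gcd: fixes x d :: "'a::comm_ring_1"
  shows "d dvd x ^ a - 1 \<Longrightarrow> d dvd x ^ b - 1 \<Longrightarrow> d dvd x ^ (gcd a b) - 1"
proof (induction a b rule: gcd_nat_induct)
  case (base m) then show ?case by simp
next
  case (step m n)
  define r where "r = m mod n"
  define q where "q = m div n"
  have m: "m = r + n * q" unfolding r_def q_def by simp
  have e: "x ^ m - 1 = x ^ r * (x ^ (n * q) - 1) + (x ^ r - 1)"
    unfolding m by (simp add: power_add algebra_simps)
  have "d dvd x ^ (n * q) - 1" using step(4) dvd_pow_mult_sub1 dvd_trans by blast
  hence "d dvd x ^ r - 1" using step(3) e
    by (metis add_diff_cancel_left' dvd_diff dvd_mult)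
  hence "d dvd x ^ gcd n r - 1" using step r_def by blast
  then show ?case by (metis gcd_red_nat r_def)
qed

definition F3 :: "'a::comm_ring_1 \<Rightarrow> 'a" where "F3 z = 1 + z + z ^ 2"

lemma F3_dvd: fixes z :: "'a::comm_ring_1" shows "F3 z dvd z ^ 3 - 1"
proof -
  have "z ^ 3 - 1 = (z - 1) * F3 z" by (simp add: F3_def algebra_simps power2_eq_square power3_eq_cube)
  then show ?thesis by simp
qed

lemma F3_dvd_pow: fixes z :: "'a::comm_ring_1" shows "F3 z dvd z ^ (3 * q) - 1"
  using F3_dvd dvd_pow_mult_sub1 dvd_trans by blast

lemma F3_dvd_F3_pow: fixes z :: "'a::comm_ring_1"
  assumes "t mod 3 \<noteq> 0" shows "F3 z dvd F3 (z ^ t)"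
proof -
  define q where "q = t div 3"
  define r where "r = t mod 3"
  have t: "t = r + 3 * q" unfolding q_def r_def by simp
  have e: "F3 (z ^ t) = F3 (z ^ r) + z ^ r * (z ^ (3 * q) - 1) + z ^ (2 * r) * (z ^ (3 * (2 * q)) - 1)"
    unfolding t F3_def by (simp add: power_add power_mult algebra_simps power2_eq_square)
  have "F3 z dvd F3 (z ^ r)"
  proof -
    have "r = 1 \<or> r = 2" using assms r_def by auto
    moreover have "F3 (z ^ 2) = F3 z + z * (z ^ 3 - 1)"
      by (simp add: F3_def algebra_simps power2_eq_square power3_eq_cube)
    ultimately show ?thesis using F3_dvd by (metis dvd_add dvd_mult dvd_refl power_one_right)
  qed
  then show ?thesis unfolding e
    by (intro dvd_add dvd_mult F3_dvd_pow)
qed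

lemma bit_poly_two: "(2 :: bit poly) = 0"
proof -
  have "(2 :: bit poly) = [:2:]" by (simp add: numeral_poly)
  also have "(2::bit) = 0" by simp
  finally show ?thesis by simp
qed

lemma bit_poly_three: "(3 :: bit poly) = 1"
proof -
  have "(3 :: bit poly) = 2 + 1" by simp
  then show ?thesis by (simp add: bit_poly_two)
qed

lemma bit_poly_add_self: "(p :: bit poly) + p = 0"
proof -
  have "p + p = 2 * p" by simp
  then show ?thesis by (simp add: bit_poly_two)
qed

lemma x_pow_monom: "([:0,1:] :: 'a::comm_semiring_1 poly) ^ n = monom 1 n"
  by (simp add: monom_altdef)

lemma gcd_3_reduce: "gcd (m::nat) (3 * a) = gcd m (3 * gcd m a)"
proof -
  have "gcd m (3 * a) = gcd (gcd m (3 * m)) (3 * a)" by simp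
  also have "\<dots> = gcd m (gcd (3 * m) (3 * a))" by (rule gcd.assoc)
  also have "gcd (3 * m) (3 * a) = 3 * gcd m a" by (simp add: gcd_mult_distrib_nat)
  finally show ?thesis .
qed

lemma F3_coprime_if:
  assumes "gcd m (3 * a) = gcd m a"
  shows "coprime (F3 (([:0,1:] :: bit poly) ^ a)) ([:0,1:] ^ m - 1)"
proof (rule coprimeI)
  fix d assume d1: "d dvd F3 (([:0,1:] :: bit poly) ^ a)" and d2: "d dvd [:0,1:] ^ m - 1"
  define x :: "bit poly" where "x = [:0,1:]"
  define y where "y = x ^ a"
  have "d dvd y ^ 3 - 1" using d1 F3_dvd dvd_trans unfolding x_def y_def by blast
  hence "d dvd x ^ (3 * a) - 1" unfolding y_def by (simp add: power_mult mult.commute)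
  hence "d dvd x ^ gcd (3 * a) m - 1" using d2 dvd_pow_gcd x_def by blast
  hence "d dvd x ^ gcd m a - 1" using assms by (simp add: gcd.commute)
  moreover have "x ^ gcd m a - 1 dvd y - 1"
    using dvd_pow_mult_sub1[of x "gcd m a" "a div gcd m a"] unfolding y_def by simp
  ultimately have dy: "d dvd y - 1" using dvd_trans by blast
  have "F3 y = (y - 1) * (y + 2) + 3" by (simp add: F3_def algebra_simps power2_eq_square)
  hence "F3 y = (y - 1) * (y + 2) + 1" by (simp add: bit_poly_three)
  hence "d dvd (y - 1) * (y + 2) + 1" using d1 unfolding y_def x_def by simp
  hence "d dvd 1" using dy by (metis dvd_add_right_iff dvd_mult2)
  then show "is_unit d" .
qed

lemma F3_coprime_only_if:
  assumes "m > 0" and "coprime (F3 (([:0,1:] :: bit poly) ^ a)) ([:0,1:] ^ m - 1)"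
  shows "gcd m (3 * a) = gcd m a"
proof (rule ccontr)
  assume ne: "gcd m (3 * a) \<noteq> gcd m a"
  define g where "g = gcd m a"
  have gpos: "g > 0" using assms(1) g_def by simp
  have h: "gcd m (3 * a) = gcd m (3 * g)" using gcd_3_reduce g_def by simp
  have "g dvd gcd m (3 * g)" by (simp add: g_def)
  then obtain e where e: "gcd m (3 * g) = g * e" by (rule dvdE)
  have "g * e dvd g * 3" using e by (metis gcd_dvd2 mult.commute)
  hence "e dvd 3" using gpos by simp
  hence "e = 1 \<or> e = 3" using prime_nat_iff[of 3] by auto
  hence "e = 3" using ne h e g_def by auto
  hence m3: "3 * g dvd m" using e by (metis gcd_dvd1 mult.commute)
  have "g dvd a" by (simp add: g_def)
  then obtain t where t: "a = g * t" by (rule dvdE)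
  have "t mod 3 \<noteq> 0"
  proof
    assume "t mod 3 = 0"
    hence "3 dvd t" by presburger
    hence "3 * g dvd a" using t by (simp add: mult.commute mult_dvd_mono)
    hence "3 * g dvd g" using m3 g_def by (metis gcd_greatest)
    hence "3 * g \<le> g" using gpos by (simp add: dvd_imp_le)
    thus False using gpos by simp
  qed
  define x :: "bit poly" where "x = [:0,1:]"
  define z where "z = x ^ g"
  have "F3 z dvd F3 (z ^ t)" using F3_dvd_F3_pow \<open>t mod 3 \<noteq> 0\<close> by blast
  hence c1: "F3 z dvd F3 (x ^ a)" unfolding z_def t by (simp add: power_mult)
  have "F3 z dvd x ^ (g * 3) - 1" using F3_dvd[of z] unfolding z_def by (simp add: power_mult)
  moreover have "x ^ (g * 3) - 1 dvd x ^ m - 1" using m3 dvd_pow_mult_sub1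
    by (metis dvdE mult.commute)
  ultimately have c2: "F3 z dvd x ^ m - 1" using dvd_trans by blast
  have u: "is_unit (F3 z)" using coprime_common_divisor[OF assms(2)] c1 c2 unfolding x_def by blast
  have zm: "z = monom 1 g" by (simp add: z_def x_def x_pow_monom)
  have Fz: "F3 z = 1 + monom 1 g + monom 1 (2 * g)"
    unfolding F3_def zm monom_power by (simp add: mult.commute)
  have "coeff (F3 z) (2 * g) = 1" unfolding Fz using gpos by (simp add: coeff_monom)
  hence nz: "F3 z \<noteq> 0" and dg: "2 * g \<le> degree (F3 z)" by (auto intro: le_degree)
  have "degree (F3 z) = 0" using u nz is_unit_iff_degree by blast
  with dg gpos show False by simp
qed

lemma coprime_add_mult_cong: fixes a b r :: "bit poly"
  shows "coprime (a + b * r) b \<longleftrightarrow> coprime a b"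
proof
  assume c: "coprime (a + b * r) b"
  show "coprime a b"
  proof (rule coprimeI)
    fix d assume "d dvd a" "d dvd b"
    hence "d dvd a + b * r" by simp
    with \<open>d dvd b\<close> show "is_unit d" using coprime_common_divisor[OF c] by blast
  qed
next
  assume c: "coprime a b"
  show "coprime (a + b * r) b"
  proof (rule coprimeI)
    fix d assume d1: "d dvd a + b * r" and d2: "d dvd b"
    have "d dvd b * r" using d2 by simp
    hence "d dvd a" using d1 by (metis add_diff_cancel_right' dvd_diff)
    with d2 show "is_unit d" using coprime_common_divisor[OF c] by blast
  qed
qed

lemma coprime_x_xpow: assumes "m > 0"
  shows "coprime (x :: bit poly) (x ^ m - 1)"
proof (rule coprimeI)
  fix d assume d1: "d dvd x" and d2: "d dvd x ^ m - 1"
  have "x ^ m = x * x ^ (m - 1)" using assms by (metis power_eq_if neq0_conv)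
  hence "d dvd x ^ m" using d1 by simp
  hence "d dvd x ^ m - (x ^ m - 1)" using d2 by (rule dvd_diff)
  then show "is_unit d" by simp
qed

lemma pcompose_xpow: "pcompose ([:0,1:] ^ j) (q :: 'a::comm_ring_1 poly) = q ^ j"
  by (induction j) (simp_all add: pcompose_mult pcompose_pCons pcompose_1)

lemma key_identity: fixes y w :: "'a::comm_ring_1"
  shows "y ^ 6 * (1 + (y + y ^ 5 * w + (y ^ 2 + y ^ 4 * w + (y ^ 5 + y * w + (y ^ 6 + w))))) =
    F3 y ^ 3 * F3 (y ^ 3) - 2 * (y + 3*y^2 + 4*y^3 + 4*y^4 + 4*y^5 + 4*y^6 + 4*y^7 + 4*y^8 + 4*y^9 + 3*y^10 + y^11)
    + (y ^ 6 * w - 1) * (y ^ 5 + y ^ 4 + y + 1)"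
  unfolding F3_def by (simp add: algebra_simps power_add[symmetric] eval_nat_numeral)

theorem proposition4:
  fixes m k :: nat
  assumes "m \<ge> 13" and "k \<ge> 1"
  shows "gcd (pcompose (cpoly m) (monom 1 k)) (monom 1 m - 1) = 1
           \<longleftrightarrow> gcd m (3 * k) = gcd m k"
proof -
  define x :: "bit poly" where "x = [:0,1:]"
  define y where "y = x ^ k"
  obtain n where mn: "m = n + 6" using assms(1) by (intro that[of "m - 6"]) simp
  have pm: "pcompose (monom 1 j) (monom 1 k) = y ^ j" for j
    unfolding y_def x_def by (simp flip: x_pow_monom add: pcompose_xpow)
  define w where "w = y ^ n"
  define P where "P = x ^ m - 1"
  define Q where "Q = pcompose (cpoly m) (monom 1 k)"
  have Qe: "Q = 1 + (y + y^5*w + (y^2 + y^4*w + (y^5 + y*w + (y^6 + w))))"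
    unfolding Q_def cpoly_def mn by (simp add: pcompose_add pcompose_sum pcompose_1 pm w_def power_add)
  have mon: "monom 1 m - 1 = P" by (simp add: P_def x_def x_pow_monom)
  have "y ^ 6 * w = y ^ m" by (simp add: w_def mn power_add)
  also have "\<dots> = x ^ (m * k)" unfolding y_def by (metis power_mult mult.commute)
  finally have ym: "y ^ 6 * w = x ^ (m * k)" .
  have "P dvd y ^ 6 * w - 1" unfolding ym P_def by (rule dvd_pow_mult_sub1)
  then obtain r where r: "y ^ 6 * w - 1 = P * r" by (rule dvdE)
  have e: "y ^ 6 * Q = F3 y ^ 3 * F3 (y ^ 3) + P * (r * (y ^ 5 + y ^ 4 + y + 1))"
    unfolding Qe key_identity r by (simp add: bit_poly_two)
  have mpos: "m > 0" using assms(1) by simp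
  have cy: "coprime (y ^ 6) P" unfolding P_def y_def using coprime_x_xpow[OF mpos, of x]
    by (simp add: power_mult[symmetric])
  have y3: "y ^ 3 = x ^ (3 * k)" unfolding y_def by (metis power_mult mult.commute)
  have "gcd Q P = 1 \<longleftrightarrow> coprime Q P" by (simp add: coprime_iff_gcd_eq_1)
  also have "\<dots> \<longleftrightarrow> coprime (y ^ 6 * Q) P" using cy by simp
  also have "\<dots> \<longleftrightarrow> coprime (F3 y ^ 3 * F3 (y ^ 3)) P" unfolding e by (rule coprime_add_mult_cong)
  also have "\<dots> \<longleftrightarrow> coprime (F3 y) P \<and> coprime (F3 (x ^ (3 * k))) P"
    using y3 by simp
  also have "\<dots> \<longleftrightarrow> gcd m (3 * k) = gcd m k"
  proof
    assume "coprime (F3 y) P \<and> coprime (F3 (x ^ (3 * k))) P"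
    then show "gcd m (3 * k) = gcd m k" using F3_coprime_only_if[OF mpos, of k] unfolding P_def x_def y_def by blast
  next
    assume h: "gcd m (3 * k) = gcd m k"
    have "gcd m (3 * (3 * k)) = gcd m (3 * gcd m (3 * k))" by (rule gcd_3_reduce)
    also have "\<dots> = gcd m (3 * gcd m k)" using h by simp
    also have "\<dots> = gcd m (3 * k)" using gcd_3_reduce by simp
    finally have h2: "gcd m (3 * (3 * k)) = gcd m (3 * k)" .
    show "coprime (F3 y) P \<and> coprime (F3 (x ^ (3 * k))) P"
      using F3_coprime_if[OF h] F3_coprime_if[OF h2] unfolding P_def x_def y_def by blast
  qed
  finally show ?thesis unfolding Q_def mon .
qed

end
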